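(* Let $\alpha,\beta$ be independent standard normal random variables and $b\in\mathbb{R}$. For any fixed constant $0<C\le1$, even $i>0$ and any $x_1\in[0,C]$, $$\mathbb{E}_{\alpha,\beta}\Big[h_i\Big(\tfrac{\alpha x_1+\beta\sqrt{C^2-x_1^2}}{C}\Big)\mathbf 1\{\alpha\ge b\}\Big]=q_ix_1^i,\quad q_i=\frac{(i-1)!!\,e^{-b^2/2}}{C^i\sqrt{2\pi}}\sum_{r=1,\ r\text{ odd}}^{i-1}\frac{(-1)^{\frac{i-r-1}{2}}}{r!!}\binom{i/2-1}{(r-1)/2}b^r.$$ Similarly, for any fixed constant $C>0$, odd $i>0$ and any $x_1\in[0,C]$, the same expectation equals $q_ix_1^i$ with $$q_i=\frac{(i-1)!!\,e^{-b^2/2}}{C^i\sqrt{2\pi}}\sum_{r=0,\ r\text{ even}}^{i-1}\frac{(-1)^{\frac{i-r-1}{2}}}{r!!}\binom{i/2-1}{(r-1)/2}b^r.$$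
   Context: $h_i$ is the degree-$i$ probabilists' Hermite polynomial, $h_i(x)=i!\sum_{k=0}^{\lfloor i/2\rfloor}\frac{(-1)^k}{k!(i-2k)!}\frac{x^{i-2k}}{2^k}$. Double factorials use $0!!=1$. Binomial coefficients with non-integer arguments are generalized binomial coefficients $\binom{a}{k}=\frac{\Gamma(a+1)}{\Gamma(k+1)\Gamma(a-k+1)}$. *)

theory Defs
  imports "HOL-Probability.Probability"
begin

definition hermite :: "nat \<Rightarrow> real \<Rightarrow> real" where
  "hermite i x = fact i * (\<Sum>k\<le>i div 2. (-1)^k / (fact k * fact (i - 2*k)) * x^(i - 2*k) / 2^k)"

fun dfact :: "nat \<Rightarrow> nat" where
  "dfact 0 = 1"
| "dfact (Suc 0) = 1"
| "dfact (Suc (Suc n)) = Suc (Suc n) * dfact n"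

definition gbinom :: "real \<Rightarrow> real \<Rightarrow> real" where
  "gbinom a k = Gamma (a + 1) / (Gamma (k + 1) * Gamma (a - k + 1))"

definition std_normal2 :: "(real \<times> real) measure" where
  "std_normal2 = density lborel std_normal_density \<Otimes>\<^sub>M density lborel std_normal_density"

end

theory Submission
  imports Defs
begin

abbreviation NN :: "real measure" where "NN \<equiv> density lborel std_normal_density"

lemma NN_ps: "prob_space NN"
  by (rule prob_space_normal_density) simp

lemma NN_sf: "sigma_finite_measure NN"
  using NN_ps prob_space_imp_sigma_finite by blast

lemma NN_pair: "pair_sigma_finite NN NN"
  using NN_sf by (simp add: pair_sigma_finite_def)

lemma NN_integrable_iff:
  fixes f :: "real \<Rightarrow> real"
  assumes [measurable]: "f \<in> borel_measurable borel"
  shows "integrable NN f \<longleftrightarrow> integrable lborel (\<lambda>x. std_normal_density x * f x)"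
  by (subst integrable_density) (auto simp: normal_density_nonneg)

lemma NN_integral:
  fixes f :: "real \<Rightarrow> real"
  assumes [measurable]: "f \<in> borel_measurable borel"
  shows "integral\<^sup>L NN f = integral\<^sup>L lborel (\<lambda>x. std_normal_density x * f x)"
  by (subst integral_density) (auto simp: normal_density_nonneg)

definition mom :: "nat \<Rightarrow> real" where
  "mom l = (if even l then fact l / (2 ^ (l div 2) * fact (l div 2)) else 0)"

lemma NN_pow_integrable: "integrable NN (\<lambda>x. x ^ k)"
  using NN_integrable_iff integrable_std_normal_moment by simp

lemma NN_pow_integral: "integral\<^sup>L NN (\<lambda>x. x ^ k) = mom k"
proof (cases "even k")
  case True
  then obtain j where k: "k = 2 * j" by auto
  show ?thesis using NN_integral integral_std_normal_moment_even[of j] k by (simp add: mom_def)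
next
  case False
  then obtain j where k: "k = 2 * j + 1" using oddE by blast
  show ?thesis using NN_integral integral_std_normal_moment_odd[of j] k by (simp add: mom_def)
qed

lemma prod_integrable:
  fixes f g :: "real \<Rightarrow> real"
  assumes f: "integrable NN f" and g: "integrable NN g"
  shows "integrable (NN \<Otimes>\<^sub>M NN) (\<lambda>p. f (fst p) * g (snd p))"
proof -
  interpret P: pair_sigma_finite NN NN by (rule NN_pair)
  have [measurable]: "f \<in> borel_measurable NN" "g \<in> borel_measurable NN" using f g by auto
  show ?thesis
  proof (rule P.Fubini_integrable)
    show "(\<lambda>p. f (fst p) * g (snd p)) \<in> borel_measurable (NN \<Otimes>\<^sub>M NN)" by measurable
    have "(\<lambda>x. \<integral> y. norm (f (fst (x, y)) * g (snd (x, y))) \<partial>NN) = (\<lambda>x. \<bar>f x\<bar> * \<integral> y. \<bar>g y\<bar> \<partial>NN)"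
      by (simp add: abs_mult)
    moreover have "integrable NN (\<lambda>x. \<bar>f x\<bar> * \<integral> y. \<bar>g y\<bar> \<partial>NN)"
      using f by (intro integrable_mult_left) auto
    ultimately show "integrable NN (\<lambda>x. \<integral> y. norm (f (fst (x, y)) * g (snd (x, y))) \<partial>NN)" by simp
    show "AE x in NN. integrable NN (\<lambda>y. f (fst (x, y)) * g (snd (x, y)))"
      using g by (auto intro!: integrable_mult_right)
  qed
qed

lemma prod_integral:
  fixes f g :: "real \<Rightarrow> real"
  assumes f: "integrable NN f" and g: "integrable NN g"
  shows "integral\<^sup>L (NN \<Otimes>\<^sub>M NN) (\<lambda>p. f (fst p) * g (snd p)) = integral\<^sup>L NN f * integral\<^sup>L NN g"
proof -
  interpret P: pair_sigma_finite NN NN by (rule NN_pair)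
  have "integral\<^sup>L (NN \<Otimes>\<^sub>M NN) (\<lambda>p. f (fst p) * g (snd p)) = (\<integral>x. (\<integral>y. f x * g y \<partial>NN) \<partial>NN)"
    using P.integral_fst'[OF prod_integrable[OF f g]] by simp
  also have "\<dots> = (\<integral>x. f x * integral\<^sup>L NN g \<partial>NN)" by simp
  also have "\<dots> = integral\<^sup>L NN f * integral\<^sup>L NN g" by simp
  finally show ?thesis .
qed


definition cf :: "nat \<Rightarrow> nat \<Rightarrow> real" where
  "cf n k = (if 2*k \<le> n then (-1)^k * fact n / (fact k * fact (n - 2*k) * 2^k) else 0)"

definition G :: "real \<Rightarrow> nat \<Rightarrow> real \<Rightarrow> real" where
  "G a n x = (\<Sum>k\<le>n. cf n k * a^k * x^(n-2*k))"

lemma hermite_G: "hermite n x = G 1 n x"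
proof -
  have "hermite n x = (\<Sum>k\<le>n div 2. cf n k * 1^k * x^(n-2*k))"
    unfolding hermite_def cf_def
    by (subst sum_distrib_left, rule sum.cong) (auto simp: field_simps)
  also have "\<dots> = G 1 n x" unfolding G_def
    by (rule sum.mono_neutral_left) (auto simp: cf_def)
  finally show ?thesis .
qed

lemma G_homog: "G (t^2) n (t*y) = t^n * G 1 n y"
  unfolding G_def sum_distrib_left
proof (rule sum.cong[OF refl])
  fix k assume "k \<in> {..n}"
  show "cf n k * (t\<^sup>2) ^ k * (t * y) ^ (n - 2 * k) = t ^ n * (cf n k * 1 ^ k * y ^ (n - 2 * k))"
  proof (cases "2*k \<le> n")
    case True
    then have "t^n = t^(2*k) * t^(n-2*k)" by (simp flip: power_add)
    then show ?thesis by (simp add: power_mult power_mult_distrib)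
  next
    case False then show ?thesis by (simp add: cf_def)
  qed
qed

lemma even_part:
  "(\<Sum>l\<le>m. real (m choose l) * u^(m-l) * s^l * mom l)
   = (\<Sum>p\<le>m. real (m choose (2*p)) * u^(m-2*p) * s^(2*p) * mom (2*p))"
proof -
  have "(\<Sum>l\<le>m. real (m choose l) * u^(m-l) * s^l * mom l)
      = (\<Sum>l\<le>Suc (2*m). real (m choose l) * u^(m-l) * s^l * mom l)"
    by (rule sum.mono_neutral_left) auto
  also have "\<dots> = (\<Sum>p\<le>m. real (m choose (2*p)) * u^(m-2*p) * s^(2*p) * mom (2*p))"
    by (subst sum.in_pairs_0) (simp add: mom_def)
  finally show ?thesis .
qed

lemma fact_identity:
  assumes "2*k + 2*p \<le> n"
  shows "cf n k * real ((n - 2*k) choose (2*p)) * mom (2*p) = cf n (k+p) * real ((k+p) choose k) * (-1)^p"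
proof -
  define q where "q = n - 2*k - 2*p"
  have q: "n = q + 2*k + 2*p" using assms unfolding q_def by simp
  have e1: "n - 2*k = q + 2*p" "n - 2*(k+p) = q" "k + p - k = p" using q by auto
  have c1: "real ((q + 2*p) choose (2*p)) = fact (q+2*p) / (fact (2*p) * fact q)"
    by (subst binomial_fact) auto
  have c2: "real ((k+p) choose k) = fact (k+p) / (fact k * fact p)"
    by (subst binomial_fact) auto
  have "cf n k = (-1)^k * fact n / (fact k * fact (q+2*p) * 2^k)" using assms e1 unfolding cf_def by simp
  moreover have "cf n (k+p) = (-1)^(k+p) * fact n / (fact (k+p) * fact q * 2^(k+p))" using assms e1 unfolding cf_def by simp
  moreover have "mom (2*p) = fact (2*p) / (2^p * fact p)" by (simp add: mom_def)
  moreover have m1: "(-1::real)^(k+p) * (-1)^p = (-1)^k"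
    by (simp add: power_add mult.assoc flip: power_mult_distrib)
  moreover have ab1: "a/(x*F*y) * (F/(P*z)) * (P/w) = a/(x*y*z*w)" if "F \<noteq> 0" "P \<noteq> 0" for a x y z w F P :: real
    using that by (simp add: field_simps)
  moreover have ab2: "a/(K*z*y) * (K/(x*r)) = a/(x*y*z*r)" if "K \<noteq> 0" for a x y z r K :: real
    using that by (simp add: field_simps)
  ultimately show ?thesis unfolding e1 c1 c2
    apply (simp only: ab1 fact_nonzero)
    apply (simp only: mult.assoc[symmetric] m1 ab2 fact_nonzero)
    apply (simp add: power_add mult_ac)
    done
qed

lemma triangle_id:
  "(\<Sum>k\<le>n. cf n k * a^k * (\<Sum>p\<le>n - 2*k. real ((n-2*k) choose (2*p)) * u^(n-2*k-2*p) * s^(2*p) * mom (2*p)))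
   = G (a - s^2) n u"
proof -
  define F where "F k p = cf n k * a^k * (real ((n-2*k) choose (2*p)) * u^(n-2*k-2*p) * s^(2*p) * mom (2*p))" for k p
  have F0: "F k p = 0" if "n < 2*k + 2*p" for k p
  proof (cases "2*k \<le> n")
    case True
    then have "n - 2*k < 2*p" using that by linarith
    then show ?thesis by (simp add: F_def)
  next
    case False then show ?thesis by (simp add: F_def cf_def)
  qed
  have "(\<Sum>k\<le>n. cf n k * a^k * (\<Sum>p\<le>n - 2*k. real ((n-2*k) choose (2*p)) * u^(n-2*k-2*p) * s^(2*p) * mom (2*p)))
      = (\<Sum>k\<le>n. \<Sum>p\<le>n. F k p)"
  proof (rule sum.cong[OF refl])
    fix k assume "k \<in> {..n}"
    have "(\<Sum>p\<le>n - 2*k. F k p) = (\<Sum>p\<le>n. F k p)"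
      by (rule sum.mono_neutral_left) (auto simp: F_def)
    then show "cf n k * a^k * (\<Sum>p\<le>n - 2*k. real ((n-2*k) choose (2*p)) * u^(n-2*k-2*p) * s^(2*p) * mom (2*p)) = (\<Sum>p\<le>n. F k p)"
      by (simp add: F_def sum_distrib_left)
  qed
  also have "\<dots> = (\<Sum>(k,p)\<in>{..n}\<times>{..n}. F k p)"
    by (simp add: sum.cartesian_product)
  also have "\<dots> = (\<Sum>(k,p)\<in>{(k,p). k + p \<le> n}. F k p)"
  proof (rule sum.mono_neutral_right)
    show "{(k, p). k + p \<le> n} \<subseteq> {..n} \<times> {..n}" by auto
    show "\<forall>i\<in>{..n} \<times> {..n} - {(k, p). k + p \<le> n}. (case i of (k, p) \<Rightarrow> F k p) = 0"
    proof
      fix i assume "i \<in> {..n} \<times> {..n} - {(k, p). k + p \<le> n}"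
      then obtain k p where "i = (k,p)" "\<not> k + p \<le> n" by auto
      then show "(case i of (k, p) \<Rightarrow> F k p) = 0" using F0[of k p] by simp
    qed
  qed auto
  also have "\<dots> = (\<Sum>m\<le>n. \<Sum>k\<le>m. F k (m - k))"
    by (rule sum.triangle_reindex_eq)
  also have "\<dots> = (\<Sum>m\<le>n. \<Sum>k\<le>m. cf n m * (real (m choose k) * a^k * (-(s^2))^(m-k)) * u^(n-2*m))"
  proof (intro sum.cong refl)
    fix m k assume m: "m \<in> {..n}" and k: "k \<in> {..m}"
    show "F k (m - k) = cf n m * (real (m choose k) * a^k * (-(s^2))^(m-k)) * u^(n-2*m)"
    proof (cases "2*m \<le> n")
      case True
      have fi: "cf n k * real ((n - 2*k) choose (2*(m-k))) * mom (2*(m-k)) = cf n (k+(m-k)) * real ((k+(m-k)) choose k) * (-1)^(m-k)"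
        using True k by (intro fact_identity) auto
      have km: "k + (m-k) = m" "n - 2*k - 2*(m-k) = n - 2*m" using k by auto
      have e: "(-(s^2))^(m-k) = (-1)^(m-k) * s^(2*(m-k))" by (metis mult_minus1 power_mult power_mult_distrib)
      have "F k (m-k) = (cf n k * real ((n - 2*k) choose (2*(m-k))) * mom (2*(m-k))) * (a^k * u^(n-2*m) * s^(2*(m-k)))"
        unfolding F_def km by (simp add: mult_ac)
      also have "\<dots> = (cf n m * real (m choose k) * (-1)^(m-k)) * (a^k * u^(n-2*m) * s^(2*(m-k)))"
        using fi unfolding km by (simp only:)
      finally show ?thesis unfolding e by (simp only: mult_ac)
    next
      case False
      then show ?thesis using F0[of k "m-k"] k by (auto simp: cf_def)
    qed
  qed
  also have "\<dots> = G (a - s^2) n u"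
    unfolding G_def
  proof (rule sum.cong[OF refl])
    fix m assume "m \<in> {..n}"
    have "(a - s^2)^m = (\<Sum>k\<le>m. real (m choose k) * a^k * (-(s^2))^(m-k))"
      using binomial_ring[of a "-(s^2)" m] by simp
    then show "(\<Sum>k\<le>m. cf n m * (real (m choose k) * a^k * (-(s^2))^(m-k)) * u^(n-2*m)) = cf n m * (a - s\<^sup>2) ^ m * u ^ (n - 2 * m)"
      by (simp add: sum_distrib_left sum_distrib_right)
  qed
  finally show ?thesis .
qed


lemma pow_expand: "(u + s*x)^m = (\<Sum>l\<le>m. real (m choose l) * u^(m-l) * s^l * x^l)"
  using binomial_ring[of "s*x" u m] by (simp add: add.commute power_mult_distrib mult_ac)

lemma int_pow_shift:
  "integrable NN (\<lambda>x. (u + s*x)^m)"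
  "integral\<^sup>L NN (\<lambda>x. (u + s*x)^m) = (\<Sum>l\<le>m. real (m choose l) * u^(m-l) * s^l * mom l)"
proof -
  have eq: "(\<lambda>x. (u + s*x)^m) = (\<lambda>x. \<Sum>l\<le>m. real (m choose l) * u^(m-l) * s^l * x^l)"
    by (simp add: pow_expand)
  show "integrable NN (\<lambda>x. (u + s*x)^m)" unfolding eq
    by (intro Bochner_Integration.integrable_sum integrable_mult_right NN_pow_integrable)
  show "integral\<^sup>L NN (\<lambda>x. (u + s*x)^m) = (\<Sum>l\<le>m. real (m choose l) * u^(m-l) * s^l * mom l)"
    unfolding eq
    by (subst Bochner_Integration.integral_sum) (auto intro!: integrable_mult_right NN_pow_integrable simp: NN_pow_integral)
qed

lemma G_shift_int:
  "integrable NN (\<lambda>x. G a n (u + s*x))"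
  "integral\<^sup>L NN (\<lambda>x. G a n (u + s*x)) = G (a - s^2) n u"
proof -
  show "integrable NN (\<lambda>x. G a n (u + s*x))" unfolding G_def
    by (intro Bochner_Integration.integrable_sum integrable_mult_right int_pow_shift)
  have "integral\<^sup>L NN (\<lambda>x. G a n (u + s*x)) = (\<Sum>k\<le>n. cf n k * a^k * integral\<^sup>L NN (\<lambda>x. (u + s*x)^(n-2*k)))"
    unfolding G_def
    by (subst Bochner_Integration.integral_sum) (auto intro!: integrable_mult_right int_pow_shift)
  also have "\<dots> = (\<Sum>k\<le>n. cf n k * a^k * (\<Sum>p\<le>n - 2*k. real ((n-2*k) choose (2*p)) * u^(n-2*k-2*p) * s^(2*p) * mom (2*p)))"
    by (simp only: int_pow_shift(2) even_part)
  also have "\<dots> = G (a - s^2) n u" by (rule triangle_id)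
  finally show "integral\<^sup>L NN (\<lambda>x. G a n (u + s*x)) = G (a - s^2) n u" .
qed

lemma integrable_ind_pow: "integrable NN (\<lambda>x. (t*x)^j * indicator {y. y \<ge> b} x)"
proof -
  have "integrable NN (\<lambda>x. indicator {y. y \<ge> b} x *\<^sub>R (t^j * x^j))"
    by (intro integrable_mult_indicator integrable_mult_right NN_pow_integrable) auto
  then show ?thesis by (simp add: power_mult_distrib mult_ac)
qed

lemma prod_G_integrable:
  "integrable (NN \<Otimes>\<^sub>M NN) (\<lambda>p. G a n (t * fst p + s * snd p) * indicator {y. y \<ge> b} (fst p))"
proof -
  have eq: "(\<lambda>p. G a n (t * fst p + s * snd p) * indicator {y. y \<ge> b} (fst p))
    = (\<lambda>p. \<Sum>k\<le>n. \<Sum>l\<le>n-2*k. (cf n k * a^k * real ((n-2*k) choose l) * s^l) *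
          (((t * fst p)^(n-2*k-l) * indicator {y. y \<ge> b} (fst p)) * (snd p)^l))"
    unfolding G_def pow_expand sum_distrib_left sum_distrib_right
    by (intro ext sum.cong refl) (simp add: mult_ac)
  show ?thesis unfolding eq
    by (intro Bochner_Integration.integrable_sum integrable_mult_right prod_integrable integrable_ind_pow NN_pow_integrable)
qed

lemma fubini_G:
  "integral\<^sup>L (NN \<Otimes>\<^sub>M NN) (\<lambda>p. G a n (t * fst p + s * snd p) * indicator {y. y \<ge> b} (fst p))
   = integral\<^sup>L NN (\<lambda>x. G (a - s^2) n (t*x) * indicator {y. y \<ge> b} x)"
proof -
  interpret P: pair_sigma_finite NN NN by (rule NN_pair)
  have "integral\<^sup>L (NN \<Otimes>\<^sub>M NN) (\<lambda>p. G a n (t * fst p + s * snd p) * indicator {y. y \<ge> b} (fst p))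
     = (\<integral>x. (\<integral>y. G a n (t * x + s * y) * indicator {y. y \<ge> b} x \<partial>NN) \<partial>NN)"
    using P.integral_fst'[OF prod_G_integrable, of a n t s b] by simp
  also have "\<dots> = integral\<^sup>L NN (\<lambda>x. G (a - s^2) n (t*x) * indicator {y. y \<ge> b} x)"
    by (simp add: G_shift_int(2))
  finally show ?thesis .
qed


lemma cf_rec: "cf (Suc n) (Suc k) = cf n (Suc k) - cf n k * real (n - 2*k)"
proof (cases "2*k + 2 \<le> n")
  case True
  define q where "q = n - 2*k - 2"
  have q: "n = q + 2*k + 2" using True unfolding q_def by simp
  have e: "Suc n - 2 * Suc k = Suc q" "n - 2 * Suc k = q" "n - 2*k = Suc (Suc q)" using q by auto
  define Z FN K Q T A B CC where "Z = ((-1)::real)^k" "FN = (fact n::real)" "K = (fact k::real)" "Q = (fact q::real)"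
    "T = (2::real)^k" "A = real q + 1" "B = real q + 2" "CC = real k + 1"
  have nz: "K \<noteq> 0" "Q \<noteq> 0" "T \<noteq> 0" "A \<noteq> 0" "B \<noteq> 0" "CC \<noteq> 0"
    unfolding Z_FN_K_Q_T_A_B_CC_def by auto
  have ab: "- Z * FN * (A + 2*CC) / (CC * K * (A * Q) * (2 * T))
      = - Z * FN / (CC * K * Q * (2*T)) - Z * FN / (K * (B * (A * Q)) * T) * B"
    using nz by (simp add: field_simps)
  have fSn: "(fact (Suc n)::real) = (A + 2*CC) * FN" unfolding Z_FN_K_Q_T_A_B_CC_def using q
    by (simp add: fact_Suc algebra_simps)
  have A1: "cf (Suc n) (Suc k) = - Z * FN * (A + 2*CC) / (CC * K * (A * Q) * (2 * T))"
    using True e fSn unfolding cf_def Z_FN_K_Q_T_A_B_CC_def by (simp add: fact_Suc mult_ac) (simp add: algebra_simps)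
  have B1: "cf n (Suc k) = - Z * FN / (CC * K * Q * (2*T))"
    using True e unfolding cf_def Z_FN_K_Q_T_A_B_CC_def by (simp add: fact_Suc mult_ac)
  have C1: "cf n k * real (n - 2*k) = Z * FN / (K * (B * (A * Q)) * T) * B"
    using True e unfolding cf_def Z_FN_K_Q_T_A_B_CC_def by (simp add: fact_Suc mult_ac add.commute)
  show ?thesis unfolding A1 B1 C1 ab ..
next
  case False
  show ?thesis
  proof (cases "2*k + 1 = n")
    case True
    have A: "cf (Suc n) (Suc k) = (-1)^Suc k * fact (Suc n) / (fact (Suc k) * 2^Suc k)"
      using True unfolding cf_def by simp
    have nk': "n - 2*k = 1" using True by simp
    have C: "cf n k = (-1)^k * fact n / (fact k * 2^k)"
      using True nk' unfolding cf_def by simp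
    have B: "cf n (Suc k) = 0" using True unfolding cf_def by simp
    have nk: "n - 2*k = 1" using True by simp
    have ab: "- Z * FN * (2 * CC) / (CC * K * (2 * T)) = - (Z * FN / (K * T))"
      if "K \<noteq> 0" "T \<noteq> 0" "CC \<noteq> 0" for Z FN K T CC :: real
      using that by (simp add: field_simps)
    have nr: "real (Suc n) = 2 * (real k + 1)" using True by simp
    have kk: "real k + 1 \<noteq> 0" by linarith
    have nr2: "real n = 2*real k + 1" using True by simp
    have fSn: "(fact (Suc n)::real) = (2*(real k+1)) * fact n" unfolding fact_Suc of_nat_mult of_nat_Suc nr2 by (simp add: algebra_simps)
    have fSk: "(fact (Suc k)::real) = (real k+1) * fact k" by (simp add: fact_Suc algebra_simps)
    have A2: "cf (Suc n) (Suc k) = - ((-1)^k * fact n / (fact k * 2^k))"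
      unfolding A fSn fSk power_Suc
      using ab[of "fact k" "2^k" "real k + 1" "(-1)^k" "fact n"] kk by (simp add: mult_ac)
    show ?thesis unfolding A2 B C nk by simp
  next
    case False
    then have "2*k > n \<or> 2*k = n" using \<open>\<not> 2*k + 2 \<le> n\<close> by linarith
    then show ?thesis using \<open>\<not> 2*k + 2 \<le> n\<close> False unfolding cf_def by auto
  qed
qed


definition D :: "nat \<Rightarrow> real \<Rightarrow> real" where
  "D n x = (\<Sum>k\<le>n. cf n k * real (n - 2*k) * x^(n - 2*k - 1))"

lemma hermite_eq: "hermite n = (\<lambda>x. \<Sum>k\<le>n. cf n k * x^(n-2*k))"
  by (rule ext) (simp add: hermite_G G_def)

lemma hermite_deriv: "(hermite n has_real_derivative D n x) (at x)"
proof -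
  have "((\<lambda>x. \<Sum>k\<le>n. cf n k * x^(n-2*k)) has_real_derivative (\<Sum>k\<le>n. cf n k * (real (n - 2*k) * x^(n - 2*k - 1)))) (at x)"
    by (intro DERIV_sum DERIV_cmult) (metis DERIV_pow One_nat_def)
  then show ?thesis unfolding hermite_eq D_def by (simp add: mult_ac)
qed

lemma hermite_rec: "hermite (Suc n) x = x * hermite n x - D n x"
proof -
  have h1: "hermite (Suc n) x = cf (Suc n) 0 * x^(Suc n) + (\<Sum>k\<le>n. cf (Suc n) (Suc k) * x^(n - 2*k - 1))"
    unfolding hermite_eq by (subst sum.atMost_Suc_shift) simp
  have "x * hermite n x = (\<Sum>k\<le>n. cf n k * x^(Suc n - 2*k))"
    unfolding hermite_eq sum_distrib_left
  proof (rule sum.cong[OF refl])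
    fix k assume "k \<in> {..n}"
    show "x * (cf n k * x ^ (n - 2 * k)) = cf n k * x ^ (Suc n - 2 * k)"
    proof (cases "2*k \<le> n")
      case True
      then have "Suc n - 2*k = Suc (n - 2*k)" by simp
      then show ?thesis by simp
    next
      case False then show ?thesis by (simp add: cf_def)
    qed
  qed
  also have "\<dots> = (\<Sum>k\<le>Suc n. cf n k * x^(Suc n - 2*k))"
    by (simp add: cf_def)
  also have "\<dots> = cf n 0 * x^(Suc n) + (\<Sum>k\<le>n. cf n (Suc k) * x^(n - 2*k - 1))"
    by (subst sum.atMost_Suc_shift) simp
  finally have h2: "x * hermite n x = cf n 0 * x^(Suc n) + (\<Sum>k\<le>n. cf n (Suc k) * x^(n - 2*k - 1))" .
  have c0: "cf (Suc n) 0 = cf n 0" by (simp add: cf_def)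
  show ?thesis unfolding h1 h2 D_def c0
    by (simp add: cf_rec left_diff_distrib sum_subtractf)
qed

lemma phi_deriv: "(std_normal_density has_real_derivative (- x * std_normal_density x)) (at x)"
proof -
  have e: "std_normal_density = (\<lambda>x. (1 / sqrt (2 * pi)) * exp (- x\<^sup>2 / 2))"
    by (rule ext) (simp add: std_normal_density_def)
  show ?thesis unfolding e
    by (auto intro!: derivative_eq_intros simp: field_simps)
qed

lemma F_deriv: "((\<lambda>x. - (std_normal_density x * hermite n x)) has_real_derivative (std_normal_density x * hermite (Suc n) x)) (at x)"
proof -
  note d = DERIV_minus[OF DERIV_mult[OF phi_deriv[of x] hermite_deriv[of n x]]]
  show ?thesis by (rule DERIV_cong[OF d]) (simp add: hermite_rec algebra_simps)
qed

lemma pow_exp_lim: "((\<lambda>x::real. x^j * exp (- x\<^sup>2 / 2)) \<longlongrightarrow> 0) at_top"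
proof (rule tendsto_sandwich)
  show "\<forall>\<^sub>F x in at_top. 0 \<le> (x::real)^j * exp (- x\<^sup>2 / 2)"
    using eventually_ge_at_top[of "0::real"] by eventually_elim simp
  show "\<forall>\<^sub>F x in at_top. (x::real)^j * exp (- x\<^sup>2 / 2) \<le> x^j / exp x"
    using eventually_ge_at_top[of "2::real"]
  proof eventually_elim
    case (elim x)
    have "x \<le> x\<^sup>2 / 2" using elim by (simp add: power2_eq_square field_simps)
    then have "exp (- x\<^sup>2 / 2) \<le> exp (-x)" by simp
    then have "x^j * exp (- x\<^sup>2 / 2) \<le> x^j * exp (-x)"
      using elim by (intro mult_left_mono) auto
    then show ?case by (simp add: exp_minus field_simps)
  qed
  show "((\<lambda>x. 0) \<longlongrightarrow> (0::real)) at_top" by simp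
  show "((\<lambda>x. x^j / exp x) \<longlongrightarrow> (0::real)) at_top" by (rule tendsto_power_div_exp_0)
qed

lemma F_lim: "((\<lambda>x. std_normal_density x * hermite n x) \<longlongrightarrow> 0) at_top"
proof -
  have e: "(\<lambda>x. std_normal_density x * hermite n x) = (\<lambda>x. (1 / sqrt (2 * pi)) * (\<Sum>k\<le>n. cf n k * (x^(n-2*k) * exp (- x\<^sup>2 / 2))))"
    by (rule ext) (simp add: std_normal_density_def hermite_eq sum_distrib_left sum_distrib_right sum_divide_distrib mult_ac)
  show ?thesis unfolding e
    by (intro tendsto_mult_right_zero tendsto_null_sum tendsto_mult_right_zero pow_exp_lim)
qed


lemma hermite_meas[measurable]: "hermite m \<in> borel_measurable borel"
  unfolding hermite_eq by measurable

lemma hermite_NN_int: "integrable NN (hermite m)"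
proof -
  have "integrable NN (\<lambda>x. G 1 m (0 + 1*x))" by (rule G_shift_int(1))
  then show ?thesis by (simp add: hermite_G[abs_def])
qed

lemma trunc_int:
  "integral\<^sup>L NN (\<lambda>x. hermite (Suc n) x * indicator {y. y \<ge> b} x) = std_normal_density b * hermite n b"
proof -
  define f where "f x = std_normal_density x * hermite (Suc n) x" for x
  define F where "F x = - (std_normal_density x * hermite n x)" for x
  have intL: "integrable lborel f"
    using hermite_NN_int[of "Suc n"] NN_integrable_iff[of "hermite (Suc n)"] unfolding f_def by simp
  have set_int: "set_integrable lborel {b..} f"
    unfolding set_integrable_def by (intro integrable_mult_indicator intL) auto
  have step1: "integral\<^sup>L NN (\<lambda>x. hermite (Suc n) x * indicator {y. y \<ge> b} x) = set_lebesgue_integral lborel {b..} f"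
    unfolding set_lebesgue_integral_def
    by (subst NN_integral) (auto simp: f_def atLeast_def mult_ac intro!: Bochner_Integration.integral_cong)
  have lim1: "((\<lambda>y. set_lebesgue_integral lborel {b..y} f) \<longlongrightarrow> set_lebesgue_integral lborel {b..} f) at_top"
    by (rule tendsto_set_lebesgue_integral_at_top[OF _ set_int]) auto
  have ev: "\<forall>\<^sub>F y in at_top. set_lebesgue_integral lborel {b..y} f = F y - F b"
    using eventually_ge_at_top[of b]
  proof eventually_elim
    case (elim y)
    have cont: "continuous_on {b..y} f"
      unfolding f_def
      by (intro continuous_at_imp_continuous_on ballI isCont_mult DERIV_isCont[OF phi_deriv] DERIV_isCont[OF hermite_deriv])
    show ?case unfolding set_lebesgue_integral_def
    proof (rule integral_FTC_atLeastAtMost[OF elim _ cont])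
      fix x assume "b \<le> x" "x \<le> y"
      have "(F has_real_derivative f x) (at x)" unfolding F_def f_def by (rule F_deriv)
      then show "(F has_vector_derivative f x) (at x within {b..y})"
        by (simp add: has_real_derivative_iff_has_vector_derivative has_vector_derivative_at_within)
    qed
  qed
  have lim2: "((\<lambda>y. F y - F b) \<longlongrightarrow> 0 - F b) at_top"
  proof (intro tendsto_diff tendsto_const)
    show "(F \<longlongrightarrow> 0) at_top" unfolding F_def using tendsto_minus[OF F_lim[of n]] by simp
  qed
  have lim3: "((\<lambda>y. set_lebesgue_integral lborel {b..y} f) \<longlongrightarrow> 0 - F b) at_top"
    by (rule Lim_transform_eventually[OF lim2]) (use ev in \<open>auto elim: eventually_mono\<close>)
  have "set_lebesgue_integral lborel {b..} f = 0 - F b"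
    using tendsto_unique[OF _ lim1 lim3] by simp
  then show ?thesis unfolding step1 F_def by simp
qed


lemma dfact_even: "real (dfact (2*m)) = 2^m * fact m"
  by (induction m) (simp_all add: algebra_simps)

lemma dfact_odd: "real (dfact (2*m+1)) * 2^m * fact m = fact (2*m+1)"
proof (induction m)
  case 0 then show ?case by simp
next
  case (Suc m)
  have e: "2 * Suc m + 1 = Suc (Suc (2*m+1))" by simp
  have "real (dfact (2 * Suc m + 1)) * 2 ^ Suc m * fact (Suc m)
      = (real (2*m+3) * (2 * real (Suc m))) * (real (dfact (2*m+1)) * 2^m * fact m)"
    unfolding e by (simp add: algebra_simps)
  also have "\<dots> = fact (2 * Suc m + 1)" unfolding Suc
    by (simp add: e algebra_simps)
  finally show ?case .
qed

lemma Gamma_half: "Gamma (real m + 1/2) = fact (2*m) * sqrt pi / (4^m * fact m)"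
proof (induction m)
  case 0 then show ?case using Gamma_one_half_real by simp
next
  case (Suc m)
  have nz: "real m + 1/2 \<notin> \<int>\<^sub>\<le>\<^sub>0"
    using nonpos_Ints_nonpos[of "real m + 1/2"] by auto
  have "Gamma (real (Suc m) + 1/2) = Gamma ((real m + 1/2) + 1)" by (simp add: algebra_simps)
  also have "\<dots> = (real m + 1/2) * Gamma (real m + 1/2)" using Gamma_plus1[OF nz] .
  also have "\<dots> = (real m + 1/2) * (fact (2*m) * sqrt pi / (4^m * fact m))" using Suc by simp
  also have "\<dots> = (2 * (real m + 1)) * ((2 * real m + 1) * fact (2*m)) * sqrt pi / ((4 * 4^m) * ((real m + 1) * fact m))"
  proof -
    have ab: "(M + 1/2) * (F * S / (T * K)) = (2 * A) * ((2 * M + 1) * F) * S / ((4 * T) * (A * K))"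
      if "A \<noteq> 0" "T \<noteq> 0" "K \<noteq> 0" for M F S T K A :: real
      using that by (simp add: field_simps)
    have "real m + 1 \<noteq> 0" by linarith
    then show ?thesis by (intro ab) auto
  qed
  also have "\<dots> = fact (2 * Suc m) * sqrt pi / (4 ^ Suc m * fact (Suc m))"
  proof -
    have e: "2 * Suc m = Suc (Suc (2*m))" by simp
    have f1: "fact (2 * Suc m) = (2 * (real m + 1)) * ((2 * real m + 1) * fact (2*m))"
      unfolding e by (simp add: algebra_simps)
    have f2: "(fact (Suc m)::real) = (real m + 1) * fact m" by (simp add: algebra_simps)
    show ?thesis unfolding f1 f2 power_Suc ..
  qed
  finally show ?case .
qed

lemma Gamma_nat1: "Gamma (real n + 1) = fact n"
  by (metis Gamma_fact add.commute)

lemma gbinom_nat: "j \<le> m \<Longrightarrow> gbinom (real m) (real j) = fact m / (fact j * fact (m - j))"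
proof -
  assume jm: "j \<le> m"
  have e: "real m - real j + 1 = real (m - j) + 1" using jm by (simp add: of_nat_diff)
  show ?thesis unfolding gbinom_def e Gamma_nat1 ..
qed

lemma gbinom_half: "j \<le> m \<Longrightarrow> gbinom (real m - 1/2) (real j - 1/2)
   = (fact (2*m) / (4^m * fact m)) / ((fact (2*j) / (4^j * fact j)) * fact (m - j))"
proof -
  assume jm: "j \<le> m"
  have e1: "real m - 1/2 + 1 = real m + 1/2" "real j - 1/2 + 1 = real j + 1/2" by simp_all
  have e2: "real m - 1/2 - (real j - 1/2) + 1 = real (m - j) + 1" using jm by (simp add: of_nat_diff)
  have sp: "sqrt pi \<noteq> 0" by simp
  have ab: "(F1 * S / (T1 * K1)) / ((F2 * S / (T2 * K2)) * Fk) = (F1 / (T1 * K1)) / ((F2 / (T2 * K2)) * Fk)"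
    if "S \<noteq> 0" for F1 F2 S T1 T2 K1 K2 Fk :: real
    using that by (simp add: field_simps)
  show ?thesis unfolding gbinom_def e1 e2 Gamma_half Gamma_nat1 ab[OF sp] ..
qed


lemma four_pow: "(4::real)^m = 2^m * 2^m"
  by (metis mult_2 numeral_Bit0 power_mult_distrib semiring_norm(2) one_add_one)

lemma dfact_pos: "dfact n > 0"
  by (induction n rule: dfact.induct) auto

lemma herm_even_sum:
  assumes i: "i = 2*m+2"
  shows "hermite (i-1) b = real (dfact (i-1)) * (\<Sum>r\<in>{r. r \<le> i-1 \<and> odd r}. (-1)^((i - r - 1) div 2) / real (dfact r)
              * gbinom (real i / 2 - 1) ((real r - 1) / 2) * b^r)"
proof -
  define n where "n = 2*m+1"
  have n: "i - 1 = n" "n div 2 = m" using i unfolding n_def by auto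
  have "hermite n b = (\<Sum>k\<le>m. fact n * ((-1)^k / (fact k * fact (n - 2*k)) * b^(n - 2*k) / 2^k))"
    unfolding hermite_def n sum_distrib_left ..
  also have "\<dots> = (\<Sum>r\<in>{r. r \<le> n \<and> odd r}. real (dfact n) * ((-1)^((i - r - 1) div 2) / real (dfact r)
              * gbinom (real i / 2 - 1) ((real r - 1) / 2) * b^r))"
  proof (rule sum.reindex_bij_witness[where j = "\<lambda>k. n - 2*k" and i = "\<lambda>r. (n - r) div 2"])
    fix k assume k: "k \<in> {..m}"
    show "(n - (n - 2 * k)) div 2 = k" using k unfolding n_def by auto
    show "n - 2 * k \<in> {r. r \<le> n \<and> odd r}" using k unfolding n_def by auto
    define jj where "jj = m - k"
    have r: "n - 2*k = 2*jj+1" "(i - (2*jj+1) - 1) div 2 = k" "m = jj + k"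
      using k i unfolding n_def jj_def by auto
    have g1: "real i / 2 - 1 = real m" using i by (simp add: field_simps)
    have g2: "(real (2*jj+1) - 1) / 2 = real jj" by simp
    have gb: "gbinom (real m) (real jj) = fact m / (fact jj * fact k)"
      using gbinom_nat[of jj m] r by simp
    have dn: "real (dfact n) * 2^m * fact m = fact n" using dfact_odd[of m] unfolding n_def .
    have dr: "real (dfact (2*jj+1)) * 2^jj * fact jj = fact (2*jj+1)" using dfact_odd[of jj] .
    have pm: "(2::real)^m = 2^jj * 2^k" unfolding r(3) by (simp add: power_add)
    have ab: "Fn * (Z / (Kk * Fr) * B / Q) = Dn * (Z / Dr * (Km / (Kj * Kk)) * B)"
      if "Dn * (P*Q) * Km = Fn" "Dr * P * Kj = Fr" "P \<noteq> 0" "Q \<noteq> 0" "Km \<noteq> 0" "Kj \<noteq> 0" "Kk \<noteq> 0" "Dr \<noteq> 0"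
      for Fn Z Kk Fr B Q Dn Dr Km Kj P :: real
      using that by (auto simp: field_simps)
    have drnz: "real (dfact (2*jj+1)) \<noteq> 0" using dfact_pos[of "2*jj+1"] by simp
    show "real (dfact n) * ((-1)^((i - (n - 2*k) - 1) div 2) / real (dfact (n - 2*k))
              * gbinom (real i / 2 - 1) ((real (n - 2*k) - 1) / 2) * b^(n - 2*k))
        = fact n * ((-1)^k / (fact k * fact (n - 2*k)) * b^(n - 2*k) / 2^k)"
      unfolding r(1,2) g1 g2 gb
      by (rule ab[symmetric]) (use dn dr pm drnz in auto)
  next
    fix r assume r: "r \<in> {r. r \<le> n \<and> odd r}"
    then show "n - 2 * ((n - r) div 2) = r" unfolding n_def by (auto elim!: oddE)
    show "(n - r) div 2 \<in> {..m}" using r unfolding n_def by auto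
  qed
  finally show ?thesis unfolding n by (simp add: sum_distrib_left)
qed

lemma herm_odd_sum:
  assumes i: "i = 2*m+1"
  shows "hermite (i-1) b = real (dfact (i-1)) * (\<Sum>r\<in>{r. r \<le> i-1 \<and> even r}. (-1)^((i - r - 1) div 2) / real (dfact r)
              * gbinom (real i / 2 - 1) ((real r - 1) / 2) * b^r)"
proof -
  define n where "n = 2*m"
  have n: "i - 1 = n" "n div 2 = m" using i unfolding n_def by auto
  have "hermite n b = (\<Sum>k\<le>m. fact n * ((-1)^k / (fact k * fact (n - 2*k)) * b^(n - 2*k) / 2^k))"
    unfolding hermite_def n sum_distrib_left ..
  also have "\<dots> = (\<Sum>r\<in>{r. r \<le> n \<and> even r}. real (dfact n) * ((-1)^((i - r - 1) div 2) / real (dfact r)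
              * gbinom (real i / 2 - 1) ((real r - 1) / 2) * b^r))"
  proof (rule sum.reindex_bij_witness[where j = "\<lambda>k. n - 2*k" and i = "\<lambda>r. (n - r) div 2"])
    fix k assume k: "k \<in> {..m}"
    show "(n - (n - 2 * k)) div 2 = k" using k unfolding n_def by auto
    show "n - 2 * k \<in> {r. r \<le> n \<and> even r}" using k unfolding n_def by auto
    define jj where "jj = m - k"
    have r: "n - 2*k = 2*jj" "(i - 2*jj - 1) div 2 = k" "m = jj + k" "m - jj = k"
      using k i unfolding n_def jj_def by auto
    have g1: "real i / 2 - 1 = real m - 1/2" using i by simp
    have g2: "(real (2*jj) - 1) / 2 = real jj - 1/2" by simp
    have gb: "gbinom (real m - 1/2) (real jj - 1/2) = (fact n / (4^m * fact m)) / ((fact (2*jj) / (4^jj * fact jj)) * fact k)"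
      using gbinom_half[of jj m] r unfolding n_def by simp
    have dn: "real (dfact n) = 2^m * fact m" using dfact_even[of m] unfolding n_def .
    have dr: "real (dfact (2*jj)) = 2^jj * fact jj" using dfact_even[of jj] .
    have pm: "(2::real)^m = 2^jj * 2^k" unfolding r(3) by (simp add: power_add)
    have ab: "Fn * (Z / (Kk * Fr) * B / Q) = ((P*Q) * Km) * (Z / (P * Kj) * ((Fn / (((P*Q)*(P*Q)) * Km)) / ((Fr / ((P*P) * Kj)) * Kk)) * B)"
      if "P \<noteq> 0" "Q \<noteq> 0" "Km \<noteq> 0" "Kj \<noteq> 0" "Kk \<noteq> 0" "Fr \<noteq> 0"
      for Fn Z Kk Fr B Q Km Kj P :: real
      using that by (auto simp: field_simps)
    show "real (dfact n) * ((-1)^((i - (n - 2*k) - 1) div 2) / real (dfact (n - 2*k))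
              * gbinom (real i / 2 - 1) ((real (n - 2*k) - 1) / 2) * b^(n - 2*k))
        = fact n * ((-1)^k / (fact k * fact (n - 2*k)) * b^(n - 2*k) / 2^k)"
      unfolding r(1,2) g1 g2 gb dn dr four_pow pm
      by (rule ab[symmetric]) auto
  next
    fix r assume r: "r \<in> {r. r \<le> n \<and> even r}"
    then show "n - 2 * ((n - r) div 2) = r" unfolding n_def by (auto elim!: evenE)
    show "(n - r) div 2 \<in> {..m}" using r unfolding n_def by auto
  qed
  finally show ?thesis unfolding n by (simp add: sum_distrib_left)
qed


lemma main_calc:
  assumes C: "C > 0" and x1: "0 \<le> x1" "x1 \<le> C" and i: "i = Suc n"
  shows "integral\<^sup>L std_normal2 (\<lambda>p. hermite i ((fst p * x1 + snd p * sqrt (C^2 - x1^2)) / C) * indicator {a. a \<ge> b} (fst p))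
    = (x1/C)^i * (std_normal_density b * hermite n b)"
proof -
  define t where "t = x1 / C"
  define s where "s = sqrt (C^2 - x1^2) / C"
  have feq: "(\<lambda>p. hermite i ((fst p * x1 + snd p * sqrt (C^2 - x1^2)) / C) * indicator {a. a \<ge> b} (fst p))
     = (\<lambda>p. G 1 i (t * fst p + s * snd p) * indicator {y. y \<ge> b} (fst p))"
    by (rule ext) (simp add: hermite_G t_def s_def add_divide_distrib mult_ac)
  have nn: "0 \<le> C^2 - x1^2" using x1 by (simp add: power_mono)
  have s2: "1 - s^2 = t^2"
  proof -
    have "s^2 = (C^2 - x1^2) / C^2" unfolding s_def power_divide real_sqrt_pow2[OF nn] ..
    moreover have "(C^2 - x1^2) / C^2 = 1 - x1^2 / C^2" using C by (simp add: diff_divide_distrib)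
    ultimately show ?thesis unfolding t_def power_divide by simp
  qed
  have "integral\<^sup>L std_normal2 (\<lambda>p. hermite i ((fst p * x1 + snd p * sqrt (C^2 - x1^2)) / C) * indicator {a. a \<ge> b} (fst p))
      = integral\<^sup>L NN (\<lambda>x. G (1 - s^2) i (t*x) * indicator {y. y \<ge> b} x)"
    unfolding feq std_normal2_def by (rule fubini_G)
  also have "\<dots> = integral\<^sup>L NN (\<lambda>x. t^i * (hermite i x * indicator {y. y \<ge> b} x))"
    unfolding s2 G_homog hermite_G by (simp add: mult_ac)
  also have "\<dots> = t^i * integral\<^sup>L NN (\<lambda>x. hermite i x * indicator {y. y \<ge> b} x)"
    by (rule Bochner_Integration.integral_mult_right_zero)
  also have "\<dots> = t^i * (std_normal_density b * hermite n b)"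
    unfolding i by (simp add: trunc_int)
  finally show ?thesis unfolding t_def .
qed

lemma final_alg:
  assumes C: "C > 0"
  shows "(x1/C)^i * (std_normal_density b * (real d * S))
    = real d * exp (- (b^2) / 2) / (C^i * sqrt (2 * pi)) * S * x1^i"
proof -
  have ab: "(X / Ci) * ((1 / Q * E) * (D * S)) = D * E / (Ci * Q) * S * X" if "Ci \<noteq> 0" "Q \<noteq> 0"
    for X Ci Q E D S :: real
    using that by (simp add: field_simps)
  have "C^i \<noteq> 0" "sqrt (2*pi) \<noteq> 0" using C by auto
  then show ?thesis unfolding std_normal_density_def power_divide by (rule ab)
qed

theorem lemma8:
  fixes b :: real
  shows
   "(\<forall>(C::real) (i::nat) (x1::real). 0 < C \<and> C \<le> 1 \<and> even i \<and> 0 < i \<and> x1 \<in> {0..C} \<longrightarrow>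
      integral\<^sup>L std_normal2 (\<lambda>p. hermite i ((fst p * x1 + snd p * sqrt (C^2 - x1^2)) / C) * indicator {a. a \<ge> b} (fst p))
      = (real (dfact (i - 1)) * exp (- (b^2) / 2) / (C^i * sqrt (2 * pi)) *
          (\<Sum>r\<in>{r. r \<le> i - 1 \<and> odd r}. (-1)^((i - r - 1) div 2) / real (dfact r)
              * gbinom (real i / 2 - 1) ((real r - 1) / 2) * b^r)) * x1^i)
  \<and> (\<forall>(C::real) (i::nat) (x1::real). 0 < C \<and> odd i \<and> x1 \<in> {0..C} \<longrightarrow>
      integral\<^sup>L std_normal2 (\<lambda>p. hermite i ((fst p * x1 + snd p * sqrt (C^2 - x1^2)) / C) * indicator {a. a \<ge> b} (fst p))
      = (real (dfact (i - 1)) * exp (- (b^2) / 2) / (C^i * sqrt (2 * pi)) *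
          (\<Sum>r\<in>{r. r \<le> i - 1 \<and> even r}. (-1)^((i - r - 1) div 2) / real (dfact r)
              * gbinom (real i / 2 - 1) ((real r - 1) / 2) * b^r)) * x1^i)"
proof (intro conjI allI impI)
  fix C :: real and i :: nat and x1 :: real
  assume h: "0 < C \<and> C \<le> 1 \<and> even i \<and> 0 < i \<and> x1 \<in> {0..C}"
  then have m: "i = 2*(i div 2 - 1)+2" by (auto elim!: evenE)
  have i: "i = Suc (i - 1)" using h by simp
  show "integral\<^sup>L std_normal2 (\<lambda>p. hermite i ((fst p * x1 + snd p * sqrt (C^2 - x1^2)) / C) * indicator {a. a \<ge> b} (fst p))
      = (real (dfact (i - 1)) * exp (- (b^2) / 2) / (C^i * sqrt (2 * pi)) *
          (\<Sum>r\<in>{r. r \<le> i - 1 \<and> odd r}. (-1)^((i - r - 1) div 2) / real (dfact r)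
              * gbinom (real i / 2 - 1) ((real r - 1) / 2) * b^r)) * x1^i"
  proof -
    have C: "C > 0" and x: "0 \<le> x1" "x1 \<le> C" using h by auto
    show ?thesis
      unfolding main_calc[OF C x i] herm_even_sum[OF m] by (rule final_alg[OF C])
  qed
next
  fix C :: real and i :: nat and x1 :: real
  assume h: "0 < C \<and> odd i \<and> x1 \<in> {0..C}"
  then obtain m where m: "i = 2*m+1" by (metis oddE)
  have i: "i = Suc (i - 1)" using m by simp
  show "integral\<^sup>L std_normal2 (\<lambda>p. hermite i ((fst p * x1 + snd p * sqrt (C^2 - x1^2)) / C) * indicator {a. a \<ge> b} (fst p))
      = (real (dfact (i - 1)) * exp (- (b^2) / 2) / (C^i * sqrt (2 * pi)) *
          (\<Sum>r\<in>{r. r \<le> i - 1 \<and> even r}. (-1)^((i - r - 1) div 2) / real (dfact r)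
              * gbinom (real i / 2 - 1) ((real r - 1) / 2) * b^r)) * x1^i"
  proof -
    have C: "C > 0" and x: "0 \<le> x1" "x1 \<le> C" using h by auto
    show ?thesis
      unfolding main_calc[OF C x i] herm_odd_sum[OF m] by (rule final_alg[OF C])
  qed
qed

end
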